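(* In the setting of the lemma on the linear representation of the forward difference (i.e. $\alpha,\beta>0$, $g(n)=\sum_{i=0}^kc_in^i$ with $c_k\ne0$, and $A_0,A_1\in\mathbb{C}^{(k+2)\times(k+2)}$ the upper triangular matrices defined there), assume $k\ge1$ and let $C=A_0+A_1$. Then the joint spectral radius of $\{A_0,A_1\}$ equals $\max\{\alpha,\beta,2^{k-1}\}$, and the set of eigenvalues of $C$ is $\{\alpha+\beta,2^k,2^{k-1},\dots,2,1\}$. If $\max\{\alpha,\beta\}\ne2^{k-1}$, then $\{A_0,A_1\}$ has the simple growth property.
   Context: Here, with $d_0=(1-\beta)x(1)-g(1)+g(0)$, $d_1=g(1)-(1-\beta)x(1)$, $b_{0j}=\sum_{i=j+1}^k\binom ij2^jc_i$, $b_{1j}=\sum_{i=j+1}^k\binom ij(2^i-2^j)c_i$, $a_{0ij}=[j=i]2^i$, $a_{1ij}=\binom ij2^j$ ($0\le i,j<k$), $b_r=(b_{r(k-1)},\dots,b_{r0})$, $\widetilde A_r=(a_{rij})_{i,j=k-1,\dots,0}$, $\mu_0=\beta$, $\mu_1=\alpha$, one has $A_r=\begin{pmatrix}\mu_r&b_r&d_r\\0&\widetilde A_r&0\\0&0&[r=0]\end{pmatrix}$ for $r\in\{0,1\}$. Joint spectral radius of a finite set $G$ of square matrices: $\rho(G)=\lim_{k\to\infty}\sup\{\|G_1\cdots G_k\|^{1/k}:G_i\in G\}$ for an induced norm. $G$ has the simple growth property if $\|G_1\cdots G_k\|=O(\rho(G)^k)$ uniformly for $G_i\in G$ as $k\to\infty$.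 $[S]$ is the Iverson bracket. *)

theory Defs
  imports Complex_Main "Jordan_Normal_Form.Spectral_Radius"
begin

definition inf_norm :: "complex mat \<Rightarrow> real" where
  "inf_norm A = Max (insert 0 ((\<lambda>i. \<Sum>j<dim_col A. cmod (A $$ (i, j))) ` {..<dim_row A}))"

definition mat_list_prod :: "nat \<Rightarrow> complex mat list \<Rightarrow> complex mat" where
  "mat_list_prod d Gs = foldr (\<lambda>A B. A * B) Gs (1\<^sub>m d)"

definition jsr_seq :: "nat \<Rightarrow> complex mat set \<Rightarrow> nat \<Rightarrow> real" where
  "jsr_seq d G n = (SUP Gs \<in> {Gs. set Gs \<subseteq> G \<and> length Gs = n}. inf_norm (mat_list_prod d Gs) powr (1 / real n))"

definition joint_spectral_radius :: "nat \<Rightarrow> complex mat set \<Rightarrow> real" where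
  "joint_spectral_radius d G = lim (jsr_seq d G)"

definition simple_growth :: "nat \<Rightarrow> complex mat set \<Rightarrow> bool" where
  "simple_growth d G \<longleftrightarrow> (\<exists>C N. \<forall>n\<ge>N. \<forall>Gs. set Gs \<subseteq> G \<and> length Gs = n \<longrightarrow>
       inf_norm (mat_list_prod d Gs) \<le> C * joint_spectral_radius d G ^ n)"

(* Index 0 is the first row/column,
   index p (1 <= p <= k) corresponds to the index i = k - p of \<tilde>A_r
   (so the order is k-1, ..., 0), and index k+1 is the last row/column. *)
definition fd_matrix ::
  "nat \<Rightarrow> real \<Rightarrow> real \<Rightarrow> (nat \<Rightarrow> real) \<Rightarrow> real \<Rightarrow> nat \<Rightarrow> complex mat" where
  "fd_matrix k \<alpha> \<beta> c x1 r = mat (k + 2) (k + 2) (\<lambda>(p, q).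
     let g = (\<lambda>n::nat. \<Sum>i\<le>k. c i * real n ^ i);
         mu = (if r = 0 then \<beta> else \<alpha>);
         d = (if r = 0 then (1 - \<beta>) * x1 - g 1 + g 0 else g 1 - (1 - \<beta>) * x1);
         b = (\<lambda>j. if r = 0 then (\<Sum>i\<in>{j+1..k}. real (i choose j) * 2 ^ j * c i)
                    else (\<Sum>i\<in>{j+1..k}. real (i choose j) * (2 ^ i - 2 ^ j) * c i));
         a = (\<lambda>i j. if r = 0 then (if j = i then 2 ^ i else 0) else real (i choose j) * 2 ^ j)
     in complex_of_real
       (if p = 0 then (if q = 0 then mu else if q \<le> k then b (k - q) else d)
        else if p \<le> k then (if 1 \<le> q \<and> q \<le> k then a (k - p) (k - q) else 0)
        else (if q = k + 1 \<and> r = 0 then 1 else 0)))"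

end

theory Submission imports Defs begin

lemma mlp_Nil[simp]: "mat_list_prod D [] = 1\<^sub>m D"
  by (simp add: mat_list_prod_def)
lemma mlp_Cons[simp]: "mat_list_prod D (A # Gs) = A * mat_list_prod D Gs"
  by (simp add: mat_list_prod_def)

lemma mlp_carrier: "G \<subseteq> carrier_mat D D \<Longrightarrow> set Gs \<subseteq> G \<Longrightarrow> mat_list_prod D Gs \<in> carrier_mat D D"
  by (induction Gs) auto

lemma mult_entry_sum:
  assumes "A \<in> carrier_mat D D" "P \<in> carrier_mat D D" "p < D" "q < D"
  shows "(A * P) $$ (p, q) = (\<Sum>s<D. A $$ (p, s) * P $$ (s, q))"
  using assms by (simp add: scalar_prod_def lessThan_atLeast0 mult.commute)

lemma step_entry:
  assumes "A \<in> carrier_mat D D" "P \<in> carrier_mat D D" "p < D" "q < D"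
  shows "cmod ((A * P) $$ (p, q)) \<le> cmod (A $$ (p, p)) * cmod (P $$ (p, q))
     + (\<Sum>s\<in>{..<D} - {p}. cmod (A $$ (p, s)) * cmod (P $$ (s, q)))"
proof -
  have "(A * P) $$ (p, q) = A $$ (p, p) * P $$ (p, q) + (\<Sum>s\<in>{..<D} - {p}. A $$ (p, s) * P $$ (s, q))"
    unfolding mult_entry_sum[OF assms] using assms(3) by (simp add: sum.remove)
  also have "cmod \<dots> \<le> cmod (A $$ (p, p) * P $$ (p, q)) + cmod (\<Sum>s\<in>{..<D} - {p}. A $$ (p, s) * P $$ (s, q))"
    by (rule norm_triangle_ineq)
  also have "\<dots> \<le> cmod (A $$ (p, p)) * cmod (P $$ (p, q)) + (\<Sum>s\<in>{..<D} - {p}. cmod (A $$ (p, s)) * cmod (P $$ (s, q)))"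
    by (metis (no_types, lifting) add_left_mono norm_mult norm_sum sum.cong)
  finally show ?thesis .
qed

definition growth :: "nat \<Rightarrow> complex mat set \<Rightarrow> nat \<Rightarrow> real \<Rightarrow> bool" where
  "growth D G p \<tau> \<longleftrightarrow> (\<exists>K. \<forall>Gs q. set Gs \<subseteq> G \<longrightarrow> q < D \<longrightarrow>
      cmod (mat_list_prod D Gs $$ (p, q)) \<le> K * \<tau> ^ length Gs)"

lemma growth_mono:
  assumes "growth D G p \<tau>" "0 \<le> \<tau>" "\<tau> \<le> \<tau>'"
  shows "growth D G p \<tau>'"
proof -
  obtain K where K: "\<And>Gs q. set Gs \<subseteq> G \<Longrightarrow> q < D \<Longrightarrow> cmod (mat_list_prod D Gs $$ (p, q)) \<le> K * \<tau> ^ length Gs"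
    using assms(1) unfolding growth_def by blast
  have "cmod (mat_list_prod D Gs $$ (p, q)) \<le> \<bar>K\<bar> * \<tau>' ^ length Gs" if "set Gs \<subseteq> G" "q < D" for Gs q
  proof -
    have "K * \<tau> ^ length Gs \<le> \<bar>K\<bar> * \<tau> ^ length Gs"
      using assms(2) by (intro mult_right_mono) auto
    also have "\<dots> \<le> \<bar>K\<bar> * \<tau>' ^ length Gs"
      using assms(2,3) by (intro mult_left_mono power_mono) auto
    finally show ?thesis using K[OF that] by linarith
  qed
  then show ?thesis unfolding growth_def by blast
qed

lemma growth_rec:
  assumes G: "G \<subseteq> carrier_mat D D" "finite G"
    and p: "p < D"
    and lam: "\<And>A. A \<in> G \<Longrightarrow> cmod (A $$ (p, p)) \<le> lm" "0 \<le> lm" "0 \<le> \<sigma>"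
    and off: "\<And>s. s < D \<Longrightarrow> s \<noteq> p \<Longrightarrow> (\<forall>A\<in>G. A $$ (p, s) = 0) \<or> growth D G s \<sigma>"
    and ne: "lm \<noteq> \<sigma>"
  shows "growth D G p (max lm \<sigma>)"
proof -
  define M where "M = (\<Sum>A\<in>G. \<Sum>s<D. cmod (A $$ (p, s)))"
  have M: "cmod (A $$ (p, s)) \<le> M" if "A \<in> G" "s < D" for A s
  proof -
    have "cmod (A $$ (p, s)) \<le> (\<Sum>s<D. cmod (A $$ (p, s)))"
      by (rule member_le_sum) (use that in auto)
    also have "\<dots> \<le> M" unfolding M_def
      by (rule member_le_sum[where f = "\<lambda>A. \<Sum>s<D. cmod (A $$ (p, s))"]) (use that G in \<open>auto intro: sum_nonneg\<close>)
    finally show ?thesis .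
  qed
  have M0: "0 \<le> M" unfolding M_def by (auto intro!: sum_nonneg)
  have "\<forall>s. \<exists>K. s < D \<longrightarrow> s \<noteq> p \<longrightarrow> \<not> (\<forall>A\<in>G. A $$ (p, s) = 0) \<longrightarrow>
     (\<forall>Gs q. set Gs \<subseteq> G \<longrightarrow> q < D \<longrightarrow> cmod (mat_list_prod D Gs $$ (s, q)) \<le> K * \<sigma> ^ length Gs)"
    using off unfolding growth_def by metis
  then obtain Kf where Kf: "\<And>s Gs q. s < D \<Longrightarrow> s \<noteq> p \<Longrightarrow> \<not> (\<forall>A\<in>G. A $$ (p, s) = 0) \<Longrightarrow>
      set Gs \<subseteq> G \<Longrightarrow> q < D \<Longrightarrow> cmod (mat_list_prod D Gs $$ (s, q)) \<le> Kf s * \<sigma> ^ length Gs"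
    by metis
  define K where "K = (\<Sum>s<D. \<bar>Kf s\<bar>)"
  have K0: "0 \<le> K" unfolding K_def by (auto intro!: sum_nonneg)
  define c where "c = real D * M * K"
  have c0: "0 \<le> c" unfolding c_def using M0 K0 by simp
  have off_bound: "(\<Sum>s\<in>{..<D} - {p}. cmod (A $$ (p, s)) * cmod (mat_list_prod D Gs $$ (s, q)))
      \<le> c * \<sigma> ^ length Gs" if A: "A \<in> G" and Gs: "set Gs \<subseteq> G" and q: "q < D" for A Gs q
  proof -
    have "(\<Sum>s\<in>{..<D} - {p}. cmod (A $$ (p, s)) * cmod (mat_list_prod D Gs $$ (s, q)))
        \<le> (\<Sum>s\<in>{..<D} - {p}. M * K * \<sigma> ^ length Gs)"
    proof (rule sum_mono)
      fix s assume s: "s \<in> {..<D} - {p}"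
      show "cmod (A $$ (p, s)) * cmod (mat_list_prod D Gs $$ (s, q)) \<le> M * K * \<sigma> ^ length Gs"
      proof (cases "\<forall>A\<in>G. A $$ (p, s) = 0")
        case True
        then show ?thesis using A M0 K0 lam(3) by simp
      next
        case False
        have "cmod (mat_list_prod D Gs $$ (s, q)) \<le> Kf s * \<sigma> ^ length Gs"
          using Kf[OF _ _ False Gs q] s by auto
        also have "\<dots> \<le> K * \<sigma> ^ length Gs"
        proof (rule mult_right_mono)
          have "Kf s \<le> \<bar>Kf s\<bar>" by simp
          also have "\<bar>Kf s\<bar> \<le> K" unfolding K_def by (rule member_le_sum) (use s in auto)
          finally show "Kf s \<le> K" .
        qed (use lam(3) in auto)
        finally have 1: "cmod (mat_list_prod D Gs $$ (s, q)) \<le> K * \<sigma> ^ length Gs" .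
        have "cmod (A $$ (p, s)) * cmod (mat_list_prod D Gs $$ (s, q)) \<le> M * (K * \<sigma> ^ length Gs)"
          by (rule mult_mono[OF M[OF A] 1]) (use s M0 in auto)
        then show ?thesis by (simp add: mult.assoc)
      qed
    qed
    also have "\<dots> = real (card ({..<D} - {p})) * (M * K * \<sigma> ^ length Gs)" by simp
    also have "\<dots> \<le> real D * (M * K * \<sigma> ^ length Gs)"
      by (rule mult_right_mono) (use M0 K0 lam(3) in \<open>auto simp: card_Diff_singleton_if\<close>)
    finally show ?thesis by (simp add: c_def mult.assoc)
  qed
  have rec: "cmod (mat_list_prod D (A # Gs) $$ (p, q)) \<le> lm * cmod (mat_list_prod D Gs $$ (p, q)) + c * \<sigma> ^ length Gs"
    if A: "A \<in> G" and Gs: "set Gs \<subseteq> G" and q: "q < D" for A Gs q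
  proof -
    have P: "mat_list_prod D Gs \<in> carrier_mat D D" using mlp_carrier[OF G(1) Gs] .
    have "cmod (mat_list_prod D (A # Gs) $$ (p, q)) \<le> cmod (A $$ (p, p)) * cmod (mat_list_prod D Gs $$ (p, q))
        + (\<Sum>s\<in>{..<D} - {p}. cmod (A $$ (p, s)) * cmod (mat_list_prod D Gs $$ (s, q)))"
      using step_entry[OF _ P p q, of A] A G by auto
    also have "\<dots> \<le> lm * cmod (mat_list_prod D Gs $$ (p, q)) + c * \<sigma> ^ length Gs"
      by (intro add_mono mult_right_mono off_bound lam(1) A Gs q) auto
    finally show ?thesis .
  qed
  have base: "cmod (mat_list_prod D [] $$ (p, q)) \<le> 1" if "q < D" for q
    using that p by (auto simp: one_mat_def)
  show ?thesis
  proof (cases "lm < \<sigma>")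
    case True
    define A0 where "A0 = max 1 (c / (\<sigma> - lm))"
    have key: "c \<le> (\<sigma> - lm) * A0"
    proof -
      have "c = (\<sigma> - lm) * (c / (\<sigma> - lm))" using True by simp
      also have "\<dots> \<le> (\<sigma> - lm) * A0" unfolding A0_def using True by (intro mult_left_mono) auto
      finally show ?thesis .
    qed
    have "\<forall>q. q < D \<longrightarrow> cmod (mat_list_prod D Gs $$ (p, q)) \<le> A0 * \<sigma> ^ length Gs" if "set Gs \<subseteq> G" for Gs
      using that
    proof (induction Gs)
      case Nil
      then show ?case using base unfolding A0_def by force
    next
      case (Cons A Gs)
      show ?case
      proof (intro allI impI)
        fix q assume q: "q < D"
        have IH: "cmod (mat_list_prod D Gs $$ (p, q)) \<le> A0 * \<sigma> ^ length Gs" using Cons q by auto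
        have "cmod (mat_list_prod D (A # Gs) $$ (p, q)) \<le> lm * cmod (mat_list_prod D Gs $$ (p, q)) + c * \<sigma> ^ length Gs"
          using rec[of A Gs q] Cons q by auto
        also have "\<dots> \<le> lm * (A0 * \<sigma> ^ length Gs) + c * \<sigma> ^ length Gs"
          using IH lam(2) by (intro add_right_mono mult_left_mono) auto
        also have "\<dots> = (lm * A0 + c) * \<sigma> ^ length Gs" by (simp add: algebra_simps)
        also have "\<dots> \<le> (\<sigma> * A0) * \<sigma> ^ length Gs"
          using key lam(3) by (intro mult_right_mono) (auto simp: algebra_simps)
        also have "\<dots> = A0 * \<sigma> ^ length (A # Gs)" by simp
        finally show "cmod (mat_list_prod D (A # Gs) $$ (p, q)) \<le> A0 * \<sigma> ^ length (A # Gs)" .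
      qed
    qed
    then show ?thesis unfolding growth_def using True by (metis max.strict_order_iff max.commute)
  next
    case False
    with ne have lt: "\<sigma> < lm" by auto
    define B where "B = c / (lm - \<sigma>)"
    have B0: "0 \<le> B" unfolding B_def using lt c0 by simp
    have Bc: "B * (lm - \<sigma>) = c" unfolding B_def using lt by simp
    have "\<forall>q. q < D \<longrightarrow> cmod (mat_list_prod D Gs $$ (p, q)) \<le> (1 + B) * lm ^ length Gs - B * \<sigma> ^ length Gs"
      if "set Gs \<subseteq> G" for Gs
      using that
    proof (induction Gs)
      case Nil
      then show ?case using base by force
    next
      case (Cons A Gs)
      show ?case
      proof (intro allI impI)
        fix q assume q: "q < D"
        have IH: "cmod (mat_list_prod D Gs $$ (p, q)) \<le> (1 + B) * lm ^ length Gs - B * \<sigma> ^ length Gs"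
          using Cons q by auto
        have "cmod (mat_list_prod D (A # Gs) $$ (p, q)) \<le> lm * cmod (mat_list_prod D Gs $$ (p, q)) + c * \<sigma> ^ length Gs"
          using rec[of A Gs q] Cons q by auto
        also have "\<dots> \<le> lm * ((1 + B) * lm ^ length Gs - B * \<sigma> ^ length Gs) + c * \<sigma> ^ length Gs"
          using IH lam(2) by (intro add_right_mono mult_left_mono) auto
        also have "\<dots> = (1 + B) * lm ^ length (A # Gs) - B * \<sigma> ^ length (A # Gs)"
          by (simp add: Bc[symmetric] algebra_simps)
        finally show "cmod (mat_list_prod D (A # Gs) $$ (p, q)) \<le> (1 + B) * lm ^ length (A # Gs) - B * \<sigma> ^ length (A # Gs)" .
      qed
    qed
    then have "cmod (mat_list_prod D Gs $$ (p, q)) \<le> (1 + B) * lm ^ length Gs"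
      if "set Gs \<subseteq> G" "q < D" for Gs q
      using that B0 lam(3) by (smt (verit, best) mult_nonneg_nonneg zero_le_power)
    then show ?thesis unfolding growth_def using lt by (metis max.absorb1 less_imp_le)
  qed
qed


lemma norm_from_growth:
  assumes G: "G \<subseteq> carrier_mat D D" and gr: "\<And>p. p < D \<Longrightarrow> growth D G p \<tau>" and t0: "0 \<le> \<tau>"
  shows "\<exists>K\<ge>0. \<forall>Gs. set Gs \<subseteq> G \<longrightarrow> inf_norm (mat_list_prod D Gs) \<le> K * \<tau> ^ length Gs"
proof -
  have "\<forall>p. \<exists>K. p < D \<longrightarrow> (\<forall>Gs q. set Gs \<subseteq> G \<longrightarrow> q < D \<longrightarrow> cmod (mat_list_prod D Gs $$ (p, q)) \<le> K * \<tau> ^ length Gs)"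
    using gr unfolding growth_def by metis
  then obtain Kf where Kf: "\<And>p Gs q. p < D \<Longrightarrow> set Gs \<subseteq> G \<Longrightarrow> q < D \<Longrightarrow>
     cmod (mat_list_prod D Gs $$ (p, q)) \<le> Kf p * \<tau> ^ length Gs" by metis
  define K where "K = real D * (\<Sum>p<D. \<bar>Kf p\<bar>)"
  have K0: "0 \<le> K" unfolding K_def by (auto intro!: sum_nonneg)
  have "inf_norm (mat_list_prod D Gs) \<le> K * \<tau> ^ length Gs" if Gs: "set Gs \<subseteq> G" for Gs
  proof -
    let ?P = "mat_list_prod D Gs"
    have P: "?P \<in> carrier_mat D D" using mlp_carrier[OF G Gs] .
    have rows: "(\<Sum>j<D. cmod (?P $$ (i, j))) \<le> K * \<tau> ^ length Gs" if i: "i < D" for i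
    proof -
      have "(\<Sum>j<D. cmod (?P $$ (i, j))) \<le> (\<Sum>j<D. \<bar>Kf i\<bar> * \<tau> ^ length Gs)"
      proof (rule sum_mono)
        fix j assume "j \<in> {..<D}"
        then have "cmod (?P $$ (i, j)) \<le> Kf i * \<tau> ^ length Gs" using Kf[OF i Gs] by auto
        also have "\<dots> \<le> \<bar>Kf i\<bar> * \<tau> ^ length Gs" using t0 by (intro mult_right_mono) auto
        finally show "cmod (?P $$ (i, j)) \<le> \<bar>Kf i\<bar> * \<tau> ^ length Gs" .
      qed
      also have "\<dots> = real D * \<bar>Kf i\<bar> * \<tau> ^ length Gs" by simp
      also have "\<dots> \<le> K * \<tau> ^ length Gs"
      proof (rule mult_right_mono)
        have "\<bar>Kf i\<bar> \<le> (\<Sum>p<D. \<bar>Kf p\<bar>)" by (rule member_le_sum) (use i in auto)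
        then show "real D * \<bar>Kf i\<bar> \<le> K" unfolding K_def by (intro mult_left_mono) auto
      qed (use t0 in auto)
      finally show ?thesis .
    qed
    show ?thesis unfolding inf_norm_def using P rows K0 t0 by (auto simp: Max_le_iff)
  qed
  then show ?thesis using K0 by blast
qed

lemma inf_norm_ge:
  assumes "P \<in> carrier_mat D D" "i < D" "j < D"
  shows "cmod (P $$ (i, j)) \<le> inf_norm P"
proof -
  have "cmod (P $$ (i, j)) \<le> (\<Sum>j<D. cmod (P $$ (i, j)))" by (rule member_le_sum) (use assms in auto)
  also have "\<dots> \<le> inf_norm P" unfolding inf_norm_def using assms by (intro Max_ge) auto
  finally show ?thesis .
qed

lemma ut_mult:
  assumes A: "A \<in> carrier_mat D D" and B: "B \<in> carrier_mat D D"
    and uA: "upper_triangular A" and uB: "upper_triangular B"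
  shows "upper_triangular (A * B)" "\<And>p. p < D \<Longrightarrow> (A * B) $$ (p, p) = A $$ (p, p) * B $$ (p, p)"
proof -
  show "upper_triangular (A * B)"
  proof
    fix i j assume ji: "j < i" and i: "i < dim_row (A * B)"
    then have iD: "i < D" using A by simp
    have "(A * B) $$ (i, j) = (\<Sum>s<D. A $$ (i, s) * B $$ (s, j))" using mult_entry_sum[OF A B iD] ji iD by simp
    also have "\<dots> = 0"
    proof (rule sum.neutral, intro ballI)
      fix s assume s: "s \<in> {..<D}"
      show "A $$ (i, s) * B $$ (s, j) = 0"
      proof (cases "s < i")
        case True then show ?thesis using upper_triangularD[OF uA True] iD A by simp
      next
        case False then have "j < s" "s < D" using ji s by auto
        then show ?thesis using upper_triangularD[OF uB, of j s] B by simp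
      qed
    qed
    finally show "(A * B) $$ (i, j) = 0" .
  qed
  fix p assume p: "p < D"
  have "(A * B) $$ (p, p) = (\<Sum>s<D. A $$ (p, s) * B $$ (s, p))" using mult_entry_sum[OF A B p p] .
  also have "\<dots> = A $$ (p, p) * B $$ (p, p) + (\<Sum>s\<in>{..<D} - {p}. A $$ (p, s) * B $$ (s, p))"
    using p by (simp add: sum.remove)
  also have "(\<Sum>s\<in>{..<D} - {p}. A $$ (p, s) * B $$ (s, p)) = 0"
  proof (rule sum.neutral, intro ballI)
    fix s assume s: "s \<in> {..<D} - {p}"
    show "A $$ (p, s) * B $$ (s, p) = 0"
    proof (cases "s < p")
      case True then show ?thesis using upper_triangularD[OF uA True] p A by simp
    next
      case False then have "p < s" "s < D" using s by auto
      then show ?thesis using upper_triangularD[OF uB, of p s] B by simp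
    qed
  qed
  finally show "(A * B) $$ (p, p) = A $$ (p, p) * B $$ (p, p)" by simp
qed

lemma ut_pow:
  assumes A: "A \<in> carrier_mat D D" and uA: "upper_triangular A"
  shows "upper_triangular (mat_list_prod D (replicate n A)) \<and>
    (\<forall>p<D. mat_list_prod D (replicate n A) $$ (p, p) = A $$ (p, p) ^ n)"
proof (induction n)
  case 0
  then show ?case by auto
next
  case (Suc n)
  have P: "mat_list_prod D (replicate n A) \<in> carrier_mat D D"
    using mlp_carrier[of "{A}" D "replicate n A"] A by (simp add: subset_iff)
  show ?case using ut_mult[OF A P uA] Suc by auto
qed


lemma fd_carrier: "fd_matrix k a b c x1 r \<in> carrier_mat (k + 2) (k + 2)"
  by (simp add: fd_matrix_def)

lemma fd_00: "fd_matrix k a b c x1 r $$ (0, 0) = complex_of_real (if r = 0 then b else a)"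
  by (simp add: fd_matrix_def Let_def)

lemma fd_last: "q < k + 2 \<Longrightarrow> fd_matrix k a b c x1 r $$ (k + 1, q) = (if q = k + 1 \<and> r = 0 then 1 else 0)"
  by (simp add: fd_matrix_def Let_def)

lemma fd_blk_zero:
  assumes "1 \<le> p" "p \<le> k" "q < k + 2" "q < p \<or> q = 0 \<or> q = k + 1"
  shows "fd_matrix k a b c x1 r $$ (p, q) = 0"
  using assms by (auto simp: fd_matrix_def Let_def binomial_eq_0)

lemma fd_blk_diag:
  assumes "1 \<le> p" "p \<le> k"
  shows "fd_matrix k a b c x1 r $$ (p, p) = 2 ^ (k - p)"
  using assms by (simp add: fd_matrix_def Let_def)

lemma fd_ut: "upper_triangular (fd_matrix k a b c x1 r)"
proof
  fix i j assume ji: "j < i" and i: "i < dim_row (fd_matrix k a b c x1 r)"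
  then have i2: "i < k + 2" by (simp add: fd_matrix_def)
  show "fd_matrix k a b c x1 r $$ (i, j) = 0"
  proof (cases "i = k + 1")
    case True then show ?thesis using fd_last[of j k] ji by auto
  next
    case False then show ?thesis using fd_blk_zero[of i k j] ji i2 by auto
  qed
qed


context
  fixes k :: nat and a b x1 :: real and c :: "nat \<Rightarrow> real"
  assumes k1: "1 \<le> k" and a0: "0 < a" and b0: "0 < b"
begin

abbreviation "GG \<equiv> {fd_matrix k a b c x1 0, fd_matrix k a b c x1 1}"

lemma GG_carrier: "GG \<subseteq> carrier_mat (k + 2) (k + 2)"
  using fd_carrier by auto

lemma row_last: "growth (k + 2) GG (k + 1) 1"
proof -
  have "growth (k + 2) GG (k + 1) (max 1 0)"
  proof (rule growth_rec[OF GG_carrier])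
    fix A assume "A \<in> GG"
    then show "cmod (A $$ (k + 1, k + 1)) \<le> 1" using fd_last[of "k+1" k] by auto
  next
    fix s assume "s < k + 2" "s \<noteq> k + 1"
    then show "(\<forall>A\<in>GG. A $$ (k + 1, s) = 0) \<or> growth (k + 2) GG s 0"
      using fd_last[of s k] by auto
  qed auto
  then show ?thesis by simp
qed

lemma row_blk: "m < k \<Longrightarrow> growth (k + 2) GG (k - m) (2 ^ m)"
proof (induction m rule: less_induct)
  case (less m)
  have "growth (k + 2) GG (k - m) (max (2 ^ m) (2 ^ m / 2))"
  proof (rule growth_rec[OF GG_carrier])
    fix A assume "A \<in> GG"
    then show "cmod (A $$ (k - m, k - m)) \<le> 2 ^ m" using fd_blk_diag[of "k - m" k] less.prems by (auto simp: norm_power)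
  next
    fix s assume s: "s < k + 2" "s \<noteq> k - m"
    show "(\<forall>A\<in>GG. A $$ (k - m, s) = 0) \<or> growth (k + 2) GG s (2 ^ m / 2)"
    proof (cases "s < k - m \<or> s = 0 \<or> s = k + 1")
      case True
      then show ?thesis using fd_blk_zero[of "k - m" k s] s less.prems by auto
    next
      case False
      then have sk: "k - m < s" "s \<le> k" using s by auto
      define m' where "m' = k - s"
      have m': "m' < m" "s = k - m'" using sk less.prems unfolding m'_def by auto
      have g: "growth (k + 2) GG s (2 ^ m')" using less.IH[OF m'(1)] m' less.prems by simp
      have "(2::real) ^ m' \<le> 2 ^ (m - 1)" using m' by (intro power_increasing) auto
      also have "\<dots> = 2 ^ m / 2" using m' by (cases m) auto
      finally show ?thesis using growth_mono[OF g] by auto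
    qed
  qed auto
  then show ?case by simp
qed

lemma row_blk': "1 \<le> p \<Longrightarrow> p \<le> k \<Longrightarrow> growth (k + 2) GG p (2 ^ (k - p))"
  using row_blk[of "k - p"] by simp

lemma row0:
  assumes "2 ^ (k - 1) \<le> \<sigma>" "max a b \<noteq> \<sigma>"
  shows "growth (k + 2) GG 0 (max (max a b) \<sigma>)"
proof (rule growth_rec[OF GG_carrier])
  fix A assume "A \<in> GG"
  then show "cmod (A $$ (0, 0)) \<le> max a b" using fd_00 a0 b0 by auto
next
  have one: "(1::real) \<le> 2 ^ (k - 1)" by simp
  fix s assume s: "s < k + 2" "s \<noteq> 0"
  show "(\<forall>A\<in>GG. A $$ (0, s) = 0) \<or> growth (k + 2) GG s \<sigma>"
  proof (cases "s = k + 1")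
    case True
    then show ?thesis using growth_mono[OF row_last _ order.trans[OF one assms(1)]] by auto
  next
    case False
    then have "1 \<le> s" "s \<le> k" using s by auto
    moreover have "(2::real) ^ (k - s) \<le> 2 ^ (k - 1)" using \<open>1 \<le> s\<close> by (intro power_increasing) auto
    ultimately show ?thesis using growth_mono[OF row_blk' _ order.trans[OF _ assms(1)]] by auto
  qed
next
  show "0 \<le> \<sigma>" using assms(1) by (smt (verit) zero_le_power)
qed (use assms a0 b0 in auto)

lemma all_rows:
  assumes "2 ^ (k - 1) \<le> \<sigma>" "max a b \<noteq> \<sigma>" "p < k + 2"
  shows "growth (k + 2) GG p (max (max a b) \<sigma>)"
proof -
  have t: "(2::real) ^ (k - 1) \<le> max (max a b) \<sigma>" using assms by auto
  consider "p = 0" | "p = k + 1" | "1 \<le> p \<and> p \<le> k" using assms by linarith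
  then show ?thesis
  proof cases
    case 1 then show ?thesis using row0[OF assms(1,2)] by simp
  next
    case 2 then show ?thesis using growth_mono[OF row_last _ order.trans[OF _ t]] by simp
  next
    case 3
    have "(2::real) ^ (k - p) \<le> 2 ^ (k - 1)" using 3 by (intro power_increasing) auto
    then show ?thesis using growth_mono[OF row_blk' _ order.trans[OF _ t]] 3 by auto
  qed
qed


lemma powr_pow_inv: "0 < (t::real) \<Longrightarrow> 1 \<le> n \<Longrightarrow> (t ^ n) powr (1 / real n) = t"
  by (simp add: powr_realpow[symmetric] powr_powr)

lemma inf_norm_nonneg: "0 \<le> inf_norm P"
  unfolding inf_norm_def by (rule Max_ge) auto

lemma upper:
  assumes "max (max a b) (2 ^ (k - 1)) < \<tau>"
  shows "\<exists>K>0. \<forall>Gs. set Gs \<subseteq> GG \<longrightarrow> 1 \<le> length Gs \<longrightarrow>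
      inf_norm (mat_list_prod (k + 2) Gs) powr (1 / real (length Gs)) \<le> K powr (1 / real (length Gs)) * \<tau>"
proof -
  have t0: "0 < \<tau>" using assms a0 by linarith
  have "\<And>p. p < k + 2 \<Longrightarrow> growth (k + 2) GG p \<tau>"
  proof -
    fix p assume p: "p < k + 2"
    have h: "2 ^ (k - 1) \<le> \<tau>" "max a b \<noteq> \<tau>" "max (max a b) \<tau> = \<tau>" using assms by auto
    show "growth (k + 2) GG p \<tau>" using all_rows[OF h(1,2) p] h(3) by simp
  qed
  from norm_from_growth[OF GG_carrier this] t0 obtain K where K: "0 \<le> K"
    "\<And>Gs. set Gs \<subseteq> GG \<Longrightarrow> inf_norm (mat_list_prod (k + 2) Gs) \<le> K * \<tau> ^ length Gs" by auto
  have "inf_norm (mat_list_prod (k + 2) Gs) powr (1 / real (length Gs)) \<le> (K + 1) powr (1 / real (length Gs)) * \<tau>"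
    if Gs: "set Gs \<subseteq> GG" and n: "1 \<le> length Gs" for Gs
  proof -
    let ?n = "length Gs"
    have "inf_norm (mat_list_prod (k + 2) Gs) \<le> (K + 1) * \<tau> ^ ?n"
    proof -
      have "K * \<tau> ^ ?n \<le> (K + 1) * \<tau> ^ ?n" using t0 by (intro mult_right_mono) auto
      then show ?thesis using K(2)[OF Gs] by linarith
    qed
    then have "inf_norm (mat_list_prod (k + 2) Gs) powr (1 / real ?n) \<le> ((K + 1) * \<tau> ^ ?n) powr (1 / real ?n)"
      by (intro powr_mono2) (auto simp: inf_norm_nonneg)
    also have "\<dots> = (K + 1) powr (1 / real ?n) * (\<tau> ^ ?n) powr (1 / real ?n)"
      using K(1) t0 by (simp add: powr_mult)
    also have "\<dots> = (K + 1) powr (1 / real ?n) * \<tau>" using powr_pow_inv[OF t0 n] by simp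
    finally show ?thesis .
  qed
  then show ?thesis using K(1) by (intro exI[of _ "K + 1"]) auto
qed

lemma jsr_upper:
  assumes "max (max a b) (2 ^ (k - 1)) < \<tau>"
  obtains K where "0 < K" "\<And>n. 1 \<le> n \<Longrightarrow> jsr_seq (k + 2) GG n \<le> K powr (1 / real n) * \<tau>"
    "\<And>n. 1 \<le> n \<Longrightarrow> bdd_above ((\<lambda>Gs. inf_norm (mat_list_prod (k + 2) Gs) powr (1 / real n)) ` {Gs. set Gs \<subseteq> GG \<and> length Gs = n})"
proof -
  obtain K where K: "0 < K" "\<And>Gs. set Gs \<subseteq> GG \<Longrightarrow> 1 \<le> length Gs \<Longrightarrow>
      inf_norm (mat_list_prod (k + 2) Gs) powr (1 / real (length Gs)) \<le> K powr (1 / real (length Gs)) * \<tau>"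
    using upper[OF assms(1)] by blast
  have ne: "{Gs. set Gs \<subseteq> GG \<and> length Gs = n} \<noteq> {}" for n
  proof -
    have "replicate n (fd_matrix k a b c x1 0) \<in> {Gs. set Gs \<subseteq> GG \<and> length Gs = n}"
      by (induct n) auto
    then show ?thesis by blast
  qed
  have "jsr_seq (k + 2) GG n \<le> K powr (1 / real n) * \<tau>" if "1 \<le> n" for n
    unfolding jsr_seq_def by (rule cSUP_least[OF ne]) (use K(2) that in auto)
  moreover have "bdd_above ((\<lambda>Gs. inf_norm (mat_list_prod (k + 2) Gs) powr (1 / real n)) ` {Gs. set Gs \<subseteq> GG \<and> length Gs = n})"
    if "1 \<le> n" for n
    by (rule bdd_aboveI2[where M = "K powr (1 / real n) * \<tau>"]) (use K(2) that in auto)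
  ultimately show ?thesis using that K(1) by blast
qed

lemma jsr_lower:
  assumes "1 \<le> n"
  shows "max (max a b) (2 ^ (k - 1)) \<le> jsr_seq (k + 2) GG n"
proof -
  have bdd: "bdd_above ((\<lambda>Gs. inf_norm (mat_list_prod (k + 2) Gs) powr (1 / real n)) ` {Gs. set Gs \<subseteq> GG \<and> length Gs = n})"
    by (rule jsr_upper[of "max (max a b) (2 ^ (k - 1)) + 1"]) (use assms in auto)
  have el: "t \<le> jsr_seq (k + 2) GG n"
    if r: "r \<in> {0, 1}" and p: "p < k + 2" and t: "0 < t" and d: "fd_matrix k a b c x1 r $$ (p, p) = complex_of_real t" for r p t
  proof -
    let ?A = "fd_matrix k a b c x1 r"
    let ?Gs = "replicate n ?A"
    have P: "mat_list_prod (k + 2) ?Gs \<in> carrier_mat (k + 2) (k + 2)"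
      using mlp_carrier[OF GG_carrier, of ?Gs] r by (auto simp: subset_iff)
    have u: "\<forall>p<k + 2. mat_list_prod (k + 2) ?Gs $$ (p, p) = ?A $$ (p, p) ^ n"
      using ut_pow[OF fd_carrier[of k a b c x1 r] fd_ut[of k a b c x1 r], of n] by blast
    have "mat_list_prod (k + 2) ?Gs $$ (p, p) = complex_of_real t ^ n"
      using u[rule_format, OF p] d by simp
    then have "t ^ n \<le> inf_norm (mat_list_prod (k + 2) ?Gs)"
      using inf_norm_ge[OF P p p] t by (simp add: norm_power)
    then have "(t ^ n) powr (1 / real n) \<le> inf_norm (mat_list_prod (k + 2) ?Gs) powr (1 / real n)"
      by (intro powr_mono2) (use t in auto)
    then have "t \<le> inf_norm (mat_list_prod (k + 2) ?Gs) powr (1 / real n)"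
      using powr_pow_inv[OF t assms] by simp
    then show ?thesis unfolding jsr_seq_def
      by (rule cSUP_upper2[OF bdd, rotated]) (use r in auto)
  qed
  have 1: "a \<le> jsr_seq (k + 2) GG n" using el[of 1 0 a] a0 fd_00 by auto
  have 2: "b \<le> jsr_seq (k + 2) GG n" using el[of 0 0 b] b0 fd_00 by auto
  have 3: "2 ^ (k - 1) \<le> jsr_seq (k + 2) GG n" using el[of 0 1 "2 ^ (k - 1)"] fd_blk_diag[of 1 k] k1 by auto
  show ?thesis using 1 2 3 by auto
qed

lemma jsr_lim: "jsr_seq (k + 2) GG \<longlonglongrightarrow> max (max a b) (2 ^ (k - 1))"
proof (rule order_tendstoI)
  fix y assume "y < max (max a b) (2 ^ (k - 1))"
  then show "\<forall>\<^sub>F n in sequentially. y < jsr_seq (k + 2) GG n"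
    using jsr_lower unfolding eventually_sequentially by (meson less_le_trans)
next
  fix y assume y: "max (max a b) (2 ^ (k - 1)) < y"
  define \<tau> where "\<tau> = (max (max a b) (2 ^ (k - 1)) + y) / 2"
  have t: "max (max a b) (2 ^ (k - 1)) < \<tau>" "\<tau> < y" using y unfolding \<tau>_def by auto
  obtain K where K: "0 < K" "\<And>n. 1 \<le> n \<Longrightarrow> jsr_seq (k + 2) GG n \<le> K powr (1 / real n) * \<tau>"
    using jsr_upper[OF t(1)] by metis
  have "(\<lambda>n. K powr (1 / real n) * \<tau>) \<longlonglongrightarrow> K powr 0 * \<tau>"
    by (intro tendsto_intros tendsto_powr lim_inverse_n') (use K in auto)
  then have "(\<lambda>n. K powr (1 / real n) * \<tau>) \<longlonglongrightarrow> \<tau>" using K(1) by simp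
  then have "\<forall>\<^sub>F n in sequentially. K powr (1 / real n) * \<tau> < y"
    using t(2) by (rule order_tendstoD(2))
  moreover have "\<forall>\<^sub>F n in sequentially. 1 \<le> n" by (rule eventually_ge_at_top)
  ultimately show "\<forall>\<^sub>F n in sequentially. jsr_seq (k + 2) GG n < y"
    by eventually_elim (use K(2) in fastforce)
qed

lemma spec: "spectrum (fd_matrix k a b c x1 0 + fd_matrix k a b c x1 1) = {complex_of_real (a + b)} \<union> {2 ^ i | i. i \<le> k}"
proof -
  let ?A = "fd_matrix k a b c x1 0" and ?B = "fd_matrix k a b c x1 1"
  let ?S = "?A + ?B"
  have S: "?S \<in> carrier_mat (k + 2) (k + 2)" using fd_carrier by (intro add_carrier_mat) auto
  have ent: "?S $$ (i, j) = ?A $$ (i, j) + ?B $$ (i, j)" if "i < k + 2" "j < k + 2" for i j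
    using that fd_carrier[of k a b c x1 1] by simp
  have ut: "upper_triangular ?S"
  proof
    fix i j assume ji: "j < i" and "i < dim_row ?S"
    have dr: "dim_row (fd_matrix k a b c x1 r) = k + 2" for r by (simp add: fd_matrix_def)
    have iD: "i < k + 2" using \<open>i < dim_row ?S\<close> dr by simp
    have "?A $$ (i, j) = 0" using upper_triangularD[OF fd_ut ji] iD dr by simp
    moreover have "?B $$ (i, j) = 0" using upper_triangularD[OF fd_ut ji] iD dr by simp
    ultimately show "?S $$ (i, j) = 0" using ent[of i j] iD ji by simp
  qed
  have "spectrum ?S = {x. poly (char_poly ?S) x = 0}" by (rule spectrum_root_char_poly[OF S])
  also have "\<dots> = set (diag_mat ?S)"
    unfolding char_poly_upper_triangular[OF S ut] poly_prod_list_zero_iff by auto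
  also have "\<dots> = (\<lambda>i. ?S $$ (i, i)) ` {..<k + 2}"
    using S by (auto simp: diag_mat_def)
  also have "\<dots> = {complex_of_real (a + b)} \<union> {2 ^ i | i. i \<le> k}"
  proof (intro equalityI subsetI)
    fix x assume "x \<in> (\<lambda>i. ?S $$ (i, i)) ` {..<k + 2}"
    then obtain i where i: "i < k + 2" "x = ?S $$ (i, i)" by auto
    consider "i = 0" | "i = k + 1" | "1 \<le> i \<and> i \<le> k" using i by linarith
    then show "x \<in> {complex_of_real (a + b)} \<union> {2 ^ i | i. i \<le> k}"
    proof cases
      case 1 then show ?thesis using i ent[of 0 0] fd_00[of k a b c x1] by simp
    next
      case 2
      then have "x = 2 ^ 0" using i ent[of i i] fd_last[of "k+1" k] by simp
      then show ?thesis by blast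
    next
      case 3
      then have "x = 2 ^ Suc (k - i)" using i ent[of i i] fd_blk_diag[of i k] by simp
      moreover have "Suc (k - i) \<le> k" using 3 by auto
      ultimately show ?thesis by blast
    qed
  next
    fix x assume "x \<in> {complex_of_real (a + b)} \<union> {2 ^ i | i. i \<le> k}"
    then consider "x = complex_of_real (a + b)" | j where "j \<le> k" "x = 2 ^ j" by blast
    then show "x \<in> (\<lambda>i. ?S $$ (i, i)) ` {..<k + 2}"
    proof cases
      case 1
      then have "x = ?S $$ (0, 0)" using ent[of 0 0] fd_00[of k a b c x1] by simp
      then show ?thesis by auto
    next
      case (2 j)
      show ?thesis
      proof (cases "j = 0")
        case True
        then have "x = ?S $$ (k + 1, k + 1)" using 2 ent[of "k+1" "k+1"] fd_last[of "k+1" k] by simp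
        then show ?thesis by (intro image_eqI[of _ _ "k + 1"]) auto
      next
        case False
        define i where "i = k + 1 - j"
        have i: "1 \<le> i" "i \<le> k" "Suc (k - i) = j" using False 2 unfolding i_def by auto
        have "?S $$ (i, i) = 2 ^ Suc (k - i)" using i(1,2) ent[of i i] fd_blk_diag[of i k] by simp
        then have "x = ?S $$ (i, i)" using i 2 by simp
        then show ?thesis using i by (intro image_eqI[of _ _ i]) auto
      qed
    qed
  qed
  finally show ?thesis .
qed
end

theorem mainTheorem8:
  fixes \<alpha> \<beta> x1 :: real and c :: "nat \<Rightarrow> real" and k :: nat
  assumes "\<alpha> > 0" and "\<beta> > 0" and "c k \<noteq> 0" and "k \<ge> 1"
  defines "A0 \<equiv> fd_matrix k \<alpha> \<beta> c x1 0"
      and "A1 \<equiv> fd_matrix k \<alpha> \<beta> c x1 1"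
  shows "jsr_seq (k + 2) {A0, A1} \<longlonglongrightarrow> max (max \<alpha> \<beta>) (2 ^ (k - 1)) \<and>
         joint_spectral_radius (k + 2) {A0, A1} = max (max \<alpha> \<beta>) (2 ^ (k - 1)) \<and>
         spectrum (A0 + A1) = {complex_of_real (\<alpha> + \<beta>)} \<union> {2 ^ i | i. i \<le> k} \<and>
         (max \<alpha> \<beta> \<noteq> 2 ^ (k - 1) \<longrightarrow> simple_growth (k + 2) {A0, A1})"
proof -
  note k1 = assms(4) and a0 = assms(1) and b0 = assms(2)
  have L: "jsr_seq (k + 2) {A0, A1} \<longlonglongrightarrow> max (max \<alpha> \<beta>) (2 ^ (k - 1))"
    unfolding A0_def A1_def using jsr_lim[OF k1 a0 b0, of c x1] .
  have J: "joint_spectral_radius (k + 2) {A0, A1} = max (max \<alpha> \<beta>) (2 ^ (k - 1))"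
    unfolding joint_spectral_radius_def using L by (rule limI)
  have S: "spectrum (A0 + A1) = {complex_of_real (\<alpha> + \<beta>)} \<union> {2 ^ i | i. i \<le> k}"
    unfolding A0_def A1_def using spec[OF k1 a0 b0, of c x1] .
  have G: "simple_growth (k + 2) {A0, A1}" if ne: "max \<alpha> \<beta> \<noteq> 2 ^ (k - 1)"
  proof -
    have gr: "\<And>p. p < k + 2 \<Longrightarrow> growth (k + 2) {A0, A1} p (max (max \<alpha> \<beta>) (2 ^ (k - 1)))"
      unfolding A0_def A1_def using all_rows[OF k1 a0 b0, of "2 ^ (k - 1)" _ c x1] ne by blast
    have C: "{A0, A1} \<subseteq> carrier_mat (k + 2) (k + 2)"
      unfolding A0_def A1_def using GG_carrier[OF k1 a0 b0] .
    have "0 \<le> max (max \<alpha> \<beta>) (2 ^ (k - 1))" using a0 by simp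
    from norm_from_growth[OF C gr this] obtain K where
      K: "\<forall>Gs. set Gs \<subseteq> {A0, A1} \<longrightarrow> inf_norm (mat_list_prod (k + 2) Gs) \<le> K * max (max \<alpha> \<beta>) (2 ^ (k - 1)) ^ length Gs"
      by blast
    show ?thesis unfolding simple_growth_def J using K by blast
  qed
  show ?thesis using L J S G by blast
qed

end
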